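(* Let $W$ be a finite reflection group acting linearly on a Euclidean vector space $\mathbb{E}$, and let $Z\subseteq\mathbb{E}$ be a $W$-invariant convex polytope. For $v\in\mathbb{E}$ let $n=v-\mathrm{pr}_Z(v)$. Then every (closed) $W$-chamber that contains $v$ also contains $n$.
   Context: $\mathrm{pr}_Z$ is the nearest-point projection onto $Z$. The $W$-chambers are the closed simplicial cones cut out by the reflection hyperplanes of $W$. *)

theory Defs
  imports "HOL-Analysis.Analysis"
begin

definition reflection :: "'a::euclidean_space \<Rightarrow> 'a \<Rightarrow> 'a" where
  "reflection a = (\<lambda>x. x - (2 * (x \<bullet> a) / (a \<bullet> a)) *\<^sub>R a)"

text \<open>The group (under composition) generated by a set R of reflections.
  Since reflections are involutions, this is closed under inverses whenever finite.\<close>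
inductive_set generated_by :: "('a \<Rightarrow> 'a) set \<Rightarrow> ('a \<Rightarrow> 'a) set" for R where
  gen_id: "id \<in> generated_by R"
| gen_step: "r \<in> R \<Longrightarrow> g \<in> generated_by R \<Longrightarrow> r \<circ> g \<in> generated_by R"

definition finite_reflection_group :: "('a::euclidean_space \<Rightarrow> 'a) set \<Rightarrow> bool" where
  "finite_reflection_group W \<longleftrightarrow> finite W \<and>
     (\<exists>R. (\<forall>r\<in>R. \<exists>a. a \<noteq> 0 \<and> r = reflection a) \<and> W = generated_by R)"

definition reflection_hyperplanes :: "('a::euclidean_space \<Rightarrow> 'a) set \<Rightarrow> 'a set set" where
  "reflection_hyperplanes W = {{x. x \<bullet> a = 0} | a. a \<noteq> 0 \<and> reflection a \<in> W}"

definition chambers :: "('a::euclidean_space \<Rightarrow> 'a) set \<Rightarrow> 'a set set" where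
  "chambers W = closure ` components (UNIV - \<Union>(reflection_hyperplanes W))"

end

theory Submission
  imports Defs
begin

lemma key_sign:
  fixes Z :: "'a::euclidean_space set"
  assumes "convex Z" "closed Z" "Z \<noteq> {}" "a \<noteq> 0" "reflection a ` Z = Z"
  shows "(closest_point Z v \<bullet> a) * ((v - closest_point Z v) \<bullet> a) \<ge> 0"
proof -
  define p where "p = closest_point Z v"
  have pZ: "p \<in> Z" using closest_point_in_set[OF assms(2,3)] p_def by simp
  hence "reflection a p \<in> Z" using assms(5) by blast
  hence "(v - p) \<bullet> (reflection a p - p) \<le> 0"
    using closest_point_dot[OF assms(1,2)] p_def by blast
  hence "(2 * (p \<bullet> a) / (a \<bullet> a)) * ((v - p) \<bullet> a) \<ge> 0"
    by (simp add: reflection_def inner_diff_right)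
  moreover have "a \<bullet> a > 0" using assms(4) by simp
  ultimately have "(p \<bullet> a) * ((v - p) \<bullet> a) / (a \<bullet> a) \<ge> 0"
    by (simp add: field_simps)
  with \<open>a \<bullet> a > 0\<close> show ?thesis unfolding p_def
    by (simp add: zero_le_divide_iff not_le[symmetric])
qed

lemma sign_arith:
  fixes P N T :: real
  assumes "(P + N) * T \<ge> 0" "P * N \<ge> 0" "T \<noteq> 0"
  shows "N * T \<ge> 0"
proof (rule ccontr)
  assume h: "\<not> ?thesis"
  hence "N \<noteq> 0" by auto
  have "((P + N) * T) * (N * T) \<le> 0" using h assms(1) by (simp add: mult_nonneg_nonpos)
  moreover have "((P + N) * T) * (N * T) = (P * N + N * N) * (T * T)" by (simp add: algebra_simps)
  moreover have "P * N + N * N > 0" using \<open>N \<noteq> 0\<close> assms(2)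
    by (metis add_nonneg_pos not_real_square_gt_zero)
  moreover have "T * T > 0" using assms(3) not_real_square_gt_zero by blast
  ultimately show False by (metis mult_pos_pos not_le)
qed

theorem mainTheorem18:
  fixes W :: "('a::euclidean_space \<Rightarrow> 'a) set" and Z :: "'a set" and v :: 'a
  assumes "finite_reflection_group W"
    and "polytope Z" and "Z \<noteq> {}"
    and "\<forall>w\<in>W. w ` Z = Z"
    and "C \<in> chambers W" and "v \<in> C"
  shows "v - closest_point Z v \<in> C"
proof -
  define U where "U = UNIV - \<Union>(reflection_hyperplanes W)"
  obtain K where K: "K \<in> components U" and CK: "C = closure K"
    using assms(5) unfolding chambers_def U_def by blast
  obtain k where kK: "k \<in> K" using in_components_nonempty[OF K] by blast
  have Kcon: "connected K" using in_components_connected[OF K] .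
  have KU: "K \<subseteq> U" using in_components_subset[OF K] .
  have cvx: "convex Z" and cl: "closed Z"
    using assms(2) polytope_imp_convex polytope_imp_closed by auto
  define p where "p = closest_point Z v"
  define n where "n = v - p"
  have root_hyp: "{x. x \<bullet> a = 0} \<in> reflection_hyperplanes W"
    if "a \<noteq> 0" "reflection a \<in> W" for a
    using that unfolding reflection_hyperplanes_def by blast
  have notin: "z \<bullet> a \<noteq> 0" if "z \<in> U" "a \<noteq> 0" "reflection a \<in> W" for z a
    using that root_hyp[OF that(2,3)] unfolding U_def by blast
  have inU: "z \<in> U" if "\<And>a. a \<noteq> 0 \<Longrightarrow> reflection a \<in> W \<Longrightarrow> z \<bullet> a \<noteq> 0" for z
    using that unfolding U_def reflection_hyperplanes_def by auto
  have Kpos: "(x \<bullet> a) * (k \<bullet> a) > 0" if xa: "x \<in> K" "a \<noteq> 0" "reflection a \<in> W" for x a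
  proof (rule ccontr)
    assume "\<not> ?thesis"
    hence "(x \<bullet> a) \<le> 0 \<and> 0 \<le> (k \<bullet> a) \<or> (k \<bullet> a) \<le> 0 \<and> 0 \<le> (x \<bullet> a)"
      by (smt (verit) mult_neg_neg mult_pos_pos)
    then obtain z where "z \<in> K" "a \<bullet> z = 0"
      using connected_ivt_hyperplane[OF Kcon xa(1) kK, of a 0]
        connected_ivt_hyperplane[OF Kcon kK xa(1), of a 0]
      by (auto simp: inner_commute)
    thus False using notin[of z a] KU xa by (auto simp: inner_commute)
  qed
  have kpos: "k \<bullet> a \<noteq> 0" if "a \<noteq> 0" "reflection a \<in> W" for a
    using notin[of k a] KU kK that by auto
  have vnn: "(v \<bullet> a) * (k \<bullet> a) \<ge> 0" if "a \<noteq> 0" "reflection a \<in> W" for a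
  proof -
    have "K \<subseteq> {x. ((k \<bullet> a) *\<^sub>R a) \<bullet> x \<ge> 0}"
      using Kpos[OF _ that] by (auto simp: inner_commute less_imp_le mult.commute)
    hence "C \<subseteq> {x. ((k \<bullet> a) *\<^sub>R a) \<bullet> x \<ge> 0}"
      unfolding CK by (rule closure_minimal) (rule closed_halfspace_ge)
    thus ?thesis using assms(6) by (auto simp: inner_commute mult.commute)
  qed
  have nnn: "(n \<bullet> a) * (k \<bullet> a) \<ge> 0" if "a \<noteq> 0" "reflection a \<in> W" for a
  proof -
    have "(p \<bullet> a) * (n \<bullet> a) \<ge> 0"
      using key_sign[OF cvx cl assms(3) that(1)] assms(4) that unfolding p_def n_def by blast
    moreover have "v \<bullet> a = p \<bullet> a + n \<bullet> a" unfolding n_def by (simp add: inner_diff_left)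
    ultimately show ?thesis using sign_arith vnn[OF that] kpos[OF that] by metis
  qed
  have yK: "n + t *\<^sub>R k \<in> K" if "t > 0" for t
  proof -
    have "closed_segment k (n + t *\<^sub>R k) \<subseteq> U"
    proof
      fix z assume "z \<in> closed_segment k (n + t *\<^sub>R k)"
      then obtain s where s: "0 \<le> s" "s \<le> 1" "z = (1 - s) *\<^sub>R k + s *\<^sub>R (n + t *\<^sub>R k)"
        unfolding closed_segment_def by auto
      show "z \<in> U"
      proof (rule inU)
        fix a assume a: "a \<noteq> 0" "reflection a \<in> W"
        have e: "(z \<bullet> a) * (k \<bullet> a) = (1 - s) * ((k \<bullet> a) * (k \<bullet> a))
              + s * ((n \<bullet> a) * (k \<bullet> a) + t * ((k \<bullet> a) * (k \<bullet> a)))"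
          unfolding s(3) by (simp add: inner_add_left algebra_simps)
        have k2: "(k \<bullet> a) * (k \<bullet> a) > 0" using kpos[OF a] not_real_square_gt_zero by blast
        have "t * ((k \<bullet> a) * (k \<bullet> a)) > 0" using k2 that by simp
        hence "(z \<bullet> a) * (k \<bullet> a) > 0" unfolding e using nnn[OF a] k2 s(1,2)
          by (smt (verit) mult_nonneg_nonneg mult_pos_pos)
        thus "z \<bullet> a \<noteq> 0" by auto
      qed
    qed
    hence "closed_segment k (n + t *\<^sub>R k) \<subseteq> K"
      using components_maximal[OF K connected_segment] kK by blast
    thus ?thesis by auto
  qed
  have "(\<lambda>m. n + inverse (real (Suc m)) *\<^sub>R k) \<longlonglongrightarrow> n + 0 *\<^sub>R k"
    by (intro tendsto_intros LIMSEQ_inverse_real_of_nat)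
  hence "n \<in> closure K"
    unfolding closure_sequential using yK by (intro exI[of _ "\<lambda>m. n + inverse (real (Suc m)) *\<^sub>R k"]) auto
  thus ?thesis unfolding CK n_def p_def .
qed

end
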